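(* Let $\theta$ be a positive integer, let $\lambda\in\mathbb{R}\setminus\{0\}$, and let $G$ be a baseline cumulative distribution function. Let $N_1,\dots,N_\theta$ be i.i.d. geometric random variables with $P(N_i=n)=p(1-p)^{n-1}$, $n=1,2,\dots$, for some $p\in(0,1]$. For each $i=1,\dots,\theta$ let $T_{i1},T_{i2},\dots$ be i.i.d. random variables with the Poisson-G distribution, i.e. with survival function $$\bar G^{PG}(t;\lambda)=\frac{e^{-\lambda G(t)}-e^{-\lambda}}{1-e^{-\lambda}},$$ where all the $T_{ij}$ and all the $N_i$ are mutually independent. Put $W_i=\min(T_{i1},\dots,T_{iN_i})$ and $V_i=\max(T_{i1},\dots,T_{iN_i})$. Then: (i) if $0<\alpha\le 1$ and $p=\alpha$, the random variable $\min_{1\le i\le\theta} W_i$ has the $\mathrm{GMOP\text{-}G}(\theta,\alpha,\lambda)$ distribution; (ii) if $\alpha>1$ and $p=1/\alpha$, the random variable $\min_{1\le i\le\theta} V_i$ has the $\mathrm{GMOP\text{-}G}(\theta,\alpha,\lambda)$ distribution.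
   Context: The generalized Marshall–Olkin Poisson-G distribution $\mathrm{GMOP\text{-}G}(\theta,\alpha,\lambda)$ with baseline cdf $G$, parameters $\theta>0$, $\alpha>0$ (write $\bar\alpha=1-\alpha$) and $\lambda\in\mathbb{R}\setminus\{0\}$, is the distribution with survival function $$\bar F(t;\theta,\alpha,\lambda)=\left[\frac{\alpha\left(e^{-\lambda G(t)}-e^{-\lambda}\right)}{1-\alpha e^{-\lambda}-\bar\alpha e^{-\lambda G(t)}}\right]^{\theta}.$$ *)

theory Defs
  imports "HOL-Probability.Probability"
begin

definition PG_surv :: "(real \<Rightarrow> real) \<Rightarrow> real \<Rightarrow> real \<Rightarrow> real" where
  "PG_surv G lam t = (exp (- lam * G t) - exp (- lam)) / (1 - exp (- lam))"

definition GMOP_surv :: "(real \<Rightarrow> real) \<Rightarrow> real \<Rightarrow> real \<Rightarrow> real \<Rightarrow> real \<Rightarrow> real" where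
  "GMOP_surv G theta alpha lam t =
     ((alpha * (exp (- lam * G t) - exp (- lam))) /
      (1 - alpha * exp (- lam) - (1 - alpha) * exp (- lam * G t))) powr theta"

definition is_cdf :: "(real \<Rightarrow> real) \<Rightarrow> bool" where
  "is_cdf G \<longleftrightarrow> mono G \<and> (\<forall>x. continuous (at_right x) G)
      \<and> (G \<longlongrightarrow> 0) at_bot \<and> (G \<longlongrightarrow> 1) at_top"

definition joint_family ::
  "(nat \<Rightarrow> 'a \<Rightarrow> nat) \<Rightarrow> (nat \<Rightarrow> nat \<Rightarrow> 'a \<Rightarrow> real) \<Rightarrow> nat + (nat \<times> nat) \<Rightarrow> 'a \<Rightarrow> real" where
  "joint_family N T k = (case k of Inl i \<Rightarrow> (\<lambda>\<omega>. real (N i \<omega>)) | Inr (i, j) \<Rightarrow> T i j)"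

definition joint_index :: "nat \<Rightarrow> (nat + (nat \<times> nat)) set" where
  "joint_index theta = Inl ` {..<theta} \<union> Inr ` ({..<theta} \<times> {1..})"

end

theory Submission
  imports Defs
begin


lemma W_meas:
  fixes N' :: "'a \<Rightarrow> nat" and T' :: "nat \<Rightarrow> 'a \<Rightarrow> real"
  assumes "N' \<in> K \<rightarrow>\<^sub>M count_space UNIV" "\<And>j. j \<ge> 1 \<Longrightarrow> T' j \<in> borel_measurable K"
  shows "(\<lambda>\<omega>. Min ((\<lambda>j. T' j \<omega>) ` {1..N' \<omega>})) \<in> borel_measurable K"
    and "(\<lambda>\<omega>. Max ((\<lambda>j. T' j \<omega>) ` {1..N' \<omega>})) \<in> borel_measurable K"
proof -
  show "(\<lambda>\<omega>. Min ((\<lambda>j. T' j \<omega>) ` {1..N' \<omega>})) \<in> borel_measurable K"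
    by (rule measurable_compose_countable'[where f="\<lambda>n \<omega>. Min ((\<lambda>j. T' j \<omega>) ` {1..n})" and g=N' and I=UNIV])
       (auto intro!: borel_measurable_Min assms)
  show "(\<lambda>\<omega>. Max ((\<lambda>j. T' j \<omega>) ` {1..N' \<omega>})) \<in> borel_measurable K"
    by (rule measurable_compose_countable'[where f="\<lambda>n \<omega>. Max ((\<lambda>j. T' j \<omega>) ` {1..n})" and g=N' and I=UNIV])
       (auto intro!: borel_measurable_Max assms)
qed

locale gmop = prob_space M for M :: "'a measure" +
  fixes theta :: nat and p :: real and N :: "nat \<Rightarrow> 'a \<Rightarrow> nat"
    and T :: "nat \<Rightarrow> nat \<Rightarrow> 'a \<Rightarrow> real" and S :: "real \<Rightarrow> real"
  assumes theta: "theta \<ge> 1" and p0: "0 < p" and p1: "p \<le> 1"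
    and indep: "indep_vars (\<lambda>_. borel) (joint_family N T) (joint_index theta)"
    and geom: "\<And>i n. i < theta \<Longrightarrow> n \<ge> 1 \<Longrightarrow>
                 prob {\<omega> \<in> space M. N i \<omega> = n} = p * (1 - p) ^ (n - 1)"
    and surv: "\<And>i j t. i < theta \<Longrightarrow> j \<ge> 1 \<Longrightarrow> prob {\<omega> \<in> space M. T i j \<omega> > t} = S t"
begin

definition EE where "EE k = {joint_family N T k -` A \<inter> space M | A. A \<in> sets borel}"
definition blk :: "nat \<Rightarrow> (nat + nat \<times> nat) set" where "blk i = insert (Inl i) (Inr ` ({i} \<times> {1..}))"
definition Mi where "Mi i = sigma (space M) (\<Union>k\<in>blk i. EE k)"

lemma rv: "k \<in> joint_index theta \<Longrightarrow> joint_family N T k \<in> borel_measurable M"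
  using indep unfolding indep_vars_def2 by auto

lemma T_meas: "i < theta \<Longrightarrow> 1 \<le> j \<Longrightarrow> T i j \<in> borel_measurable M"
  using rv[of "Inr (i,j)"] by (simp add: joint_family_def joint_index_def)

lemma N_meas_real: "i < theta \<Longrightarrow> (\<lambda>\<omega>. real (N i \<omega>)) \<in> borel_measurable M"
  using rv[of "Inl i"] by (simp add: joint_family_def joint_index_def)

lemma N_set_eq: "{\<omega>\<in>space M. N i \<omega> = n} = (\<lambda>\<omega>. real (N i \<omega>)) -` {real n} \<inter> space M"
  by auto

lemma N_ev: "i < theta \<Longrightarrow> {\<omega>\<in>space M. N i \<omega> = n} \<in> events"
  unfolding N_set_eq by (rule measurable_sets[OF N_meas_real]) auto

lemma N_meas: "i < theta \<Longrightarrow> N i \<in> M \<rightarrow>\<^sub>M count_space UNIV"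
  unfolding measurable_count_space_eq2_countable
  using N_ev by (auto simp: vimage_def Int_def conj_commute)

lemma EE_sub: "EE k \<subseteq> Pow (space M)"
  unfolding EE_def by auto

lemma Mi_space: "space (Mi i) = space M"
  unfolding Mi_def by (rule space_measure_of_conv)

lemma Mi_sets: "sets (Mi i) = sigma_sets (space M) (\<Union>k\<in>blk i. EE k)"
  unfolding Mi_def by (rule sets_measure_of) (use EE_sub in blast)

lemma blk_N: "N i \<in> Mi i \<rightarrow>\<^sub>M count_space UNIV"
  unfolding measurable_count_space_eq2_countable Mi_space Mi_sets
proof (intro conjI ballI)
  fix n assume "n \<in> (UNIV::nat set)"
  have "N i -` {n} \<inter> space M = joint_family N T (Inl i) -` {real n} \<inter> space M"
    by (auto simp: joint_family_def)
  also have "\<dots> \<in> EE (Inl i)" unfolding EE_def by auto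
  finally show "N i -` {n} \<inter> space M \<in> sigma_sets (space M) (\<Union>k\<in>blk i. EE k)"
    by (intro sigma_sets.Basic) (auto simp: blk_def)
qed auto

lemma blk_T: "1 \<le> j \<Longrightarrow> T i j \<in> borel_measurable (Mi i)"
proof (rule measurableI)
  fix A :: "real set" assume "j \<ge> 1" "A \<in> sets borel"
  then have "T i j -` A \<inter> space M \<in> EE (Inr (i,j))" unfolding EE_def
    by (auto simp: joint_family_def)
  then show "T i j -` A \<inter> space (Mi i) \<in> sets (Mi i)"
    unfolding Mi_space Mi_sets using \<open>j \<ge> 1\<close>
    by (intro sigma_sets.Basic) (auto simp: blk_def)
qed auto

lemma blocks_indep: "indep_sets (\<lambda>i. sets (Mi i)) {..<theta}"
proof -
  have U: "(\<Union>i\<in>{..<theta}. blk i) = joint_index theta"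
    by (auto simp: blk_def joint_index_def)
  have I: "indep_sets EE (joint_index theta)"
    using indep unfolding indep_vars_def2 EE_def by auto
  have "indep_sets (\<lambda>i. sigma_sets (space M) (\<Union>k\<in>blk i. EE k)) {..<theta}"
  proof (rule indep_sets_collect_sigma)
    show "indep_sets EE (\<Union>i\<in>{..<theta}. blk i)" using I U by simp
  next
    fix k i assume "i \<in> {..<theta}" "k \<in> blk i"
    show "Int_stable (EE k)"
      unfolding EE_def
      apply (auto simp: Int_stable_def)
      apply (rule_tac x="A \<inter> Aa" in exI)
      apply auto
      done
  next
    show "disjoint_family_on blk {..<theta}"
      by (auto simp: disjoint_family_on_def blk_def)
  qed
  then show ?thesis by (simp add: Mi_sets)
qed


lemma S_bounds: "0 \<le> S t" "S t \<le> 1"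
  using surv[of 0 1 t, symmetric] theta measure_nonneg prob_le_1 by auto

lemma prod_indep:
  assumes i: "i < theta" and B: "\<And>j. B j \<in> sets borel"
  shows "prob ({\<omega>\<in>space M. N i \<omega> = n} \<inter> (\<Inter>j\<in>{1..n}. T i j -` B j \<inter> space M))
         = prob {\<omega>\<in>space M. N i \<omega> = n} * (\<Prod>j\<in>{1..n}. prob (T i j -` B j \<inter> space M))"
proof -
  have I: "indep_sets EE (joint_index theta)"
    using indep unfolding indep_vars_def2 EE_def by auto
  define J where "J = insert (Inl i) (Inr ` ((\<lambda>j. (i,j)) ` {1..n}))"
  define A where "A k = (case k of Inl _ \<Rightarrow> {\<omega>\<in>space M. N i \<omega> = n}
                          | Inr (_, j) \<Rightarrow> T i j -` B j \<inter> space M)" for k :: "nat + nat \<times> nat"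
  have "prob (\<Inter>k\<in>J. A k) = (\<Prod>k\<in>J. prob (A k))"
  proof (rule indep_setsD[OF I])
    show "J \<subseteq> joint_index theta" using i by (auto simp: J_def joint_index_def)
    show "J \<noteq> {}" "finite J" by (auto simp: J_def)
    show "\<forall>k\<in>J. A k \<in> EE k"
    proof
      fix k assume "k \<in> J"
      then consider "k = Inl i" | j where "j \<in> {1..n}" "k = Inr (i,j)" by (auto simp: J_def)
      then show "A k \<in> EE k"
      proof cases
        case 1
        have "A k = joint_family N T (Inl i) -` {real n} \<inter> space M"
          using 1 by (auto simp: A_def joint_family_def)
        then show ?thesis using 1 unfolding EE_def by auto
      next
        case 2
        have "A k = joint_family N T k -` B j \<inter> space M"
          using 2 by (auto simp: A_def joint_family_def)
        then show ?thesis using B unfolding EE_def by auto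
      qed
    qed
  qed
  moreover have "(\<Inter>k\<in>J. A k) = {\<omega>\<in>space M. N i \<omega> = n} \<inter> (\<Inter>j\<in>{1..n}. T i j -` B j \<inter> space M)"
    by (auto simp: J_def A_def)
  moreover have "(\<Prod>k\<in>J. prob (A k)) = prob {\<omega>\<in>space M. N i \<omega> = n} * (\<Prod>j\<in>{1..n}. prob (T i j -` B j \<inter> space M))"
    unfolding J_def
    by (subst prod.insert) (auto simp: prod.reindex inj_on_def A_def)
  ultimately show ?thesis by simp
qed

lemma N0: assumes i: "i < theta" shows "prob {\<omega>\<in>space M. N i \<omega> = 0} = 0"
proof -
  have "(\<lambda>n. prob {\<omega>\<in>space M. N i \<omega> = n}) sums prob (\<Union>n. {\<omega>\<in>space M. N i \<omega> = n})"
    by (rule finite_measure_UNION) (auto simp: N_ev[OF i] disjoint_family_on_def)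
  moreover have "(\<Union>n. {\<omega>\<in>space M. N i \<omega> = n}) = space M" by auto
  ultimately have s1: "(\<lambda>n. prob {\<omega>\<in>space M. N i \<omega> = n}) sums 1" by (simp add: prob_space)
  have "(\<lambda>n. p * (1 - p) ^ n) sums (p * (1 / (1 - (1 - p))))"
    by (intro sums_mult geometric_sums) (use p0 p1 in auto)
  then have "(\<lambda>n. prob {\<omega>\<in>space M. N i \<omega> = Suc n}) sums 1"
    using geom[OF i] p0 by simp
  then have "(\<lambda>n. prob {\<omega>\<in>space M. N i \<omega> = n}) sums (1 + prob {\<omega>\<in>space M. N i \<omega> = 0})"
    using sums_Suc_iff[of "\<lambda>n. prob {\<omega>\<in>space M. N i \<omega> = n}" 1] by simp
  with s1 show ?thesis using sums_unique2 by fastforce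
qed

lemma sum_N:
  assumes i: "i < theta" and E: "E \<in> events"
    and f: "\<And>n. n \<ge> 1 \<Longrightarrow> prob (E \<inter> {\<omega>\<in>space M. N i \<omega> = n}) = f n"
    and s: "(\<lambda>n. f (Suc n)) sums c"
  shows "prob E = c"
proof -
  have "(\<lambda>n. prob (E \<inter> {\<omega>\<in>space M. N i \<omega> = n})) sums prob (\<Union>n. E \<inter> {\<omega>\<in>space M. N i \<omega> = n})"
    by (rule finite_measure_UNION) (auto simp: N_ev[OF i] E disjoint_family_on_def)
  moreover have "(\<Union>n. E \<inter> {\<omega>\<in>space M. N i \<omega> = n}) = E" using E sets.sets_into_space by auto
  ultimately have s0: "(\<lambda>n. prob (E \<inter> {\<omega>\<in>space M. N i \<omega> = n})) sums prob E" by simp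
  have z: "prob (E \<inter> {\<omega>\<in>space M. N i \<omega> = 0}) = 0"
    using finite_measure_mono[of "E \<inter> {\<omega>\<in>space M. N i \<omega> = 0}" "{\<omega>\<in>space M. N i \<omega> = 0}"]
      N0[OF i] N_ev[OF i] by (simp add: measure_nonneg antisym)
  have "(\<lambda>n. prob (E \<inter> {\<omega>\<in>space M. N i \<omega> = Suc n})) sums prob E"
    using sums_Suc_iff[of "\<lambda>n. prob (E \<inter> {\<omega>\<in>space M. N i \<omega> = n})" "prob E"] s0 z by simp
  then have "(\<lambda>n. f (Suc n)) sums prob E" using f by simp
  with s show ?thesis using sums_unique2 by blast
qed


lemma Wmin_sets:
  assumes i: "i < theta"
  shows "{\<omega>\<in>space M. t < Min ((\<lambda>j. T i j \<omega>) ` {1..N i \<omega>})} \<in> sets (Mi i)"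
    and "{\<omega>\<in>space M. t < Min ((\<lambda>j. T i j \<omega>) ` {1..N i \<omega>})} \<in> events"
proof -
  have m: "(\<lambda>\<omega>. Min ((\<lambda>j. T i j \<omega>) ` {1..N i \<omega>})) \<in> borel_measurable (Mi i)"
    by (rule W_meas(1)[OF blk_N blk_T])
  have "(\<lambda>\<omega>. Min ((\<lambda>j. T i j \<omega>) ` {1..N i \<omega>})) -` {t<..} \<inter> space (Mi i) \<in> sets (Mi i)"
    by (rule measurable_sets[OF m]) auto
  then show "{\<omega>\<in>space M. t < Min ((\<lambda>j. T i j \<omega>) ` {1..N i \<omega>})} \<in> sets (Mi i)"
    unfolding Mi_space by (simp add: vimage_def Int_def conj_commute)
  have m2: "(\<lambda>\<omega>. Min ((\<lambda>j. T i j \<omega>) ` {1..N i \<omega>})) \<in> borel_measurable M"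
    by (rule W_meas(1)[OF N_meas[OF i] T_meas[OF i]])
  have "(\<lambda>\<omega>. Min ((\<lambda>j. T i j \<omega>) ` {1..N i \<omega>})) -` {t<..} \<inter> space M \<in> events"
    by (rule measurable_sets[OF m2]) auto
  then show "{\<omega>\<in>space M. t < Min ((\<lambda>j. T i j \<omega>) ` {1..N i \<omega>})} \<in> events"
    by (simp add: vimage_def Int_def conj_commute)
qed

lemma Vmax_sets:
  assumes i: "i < theta"
  shows "{\<omega>\<in>space M. t < Max ((\<lambda>j. T i j \<omega>) ` {1..N i \<omega>})} \<in> sets (Mi i)"
    and "{\<omega>\<in>space M. t < Max ((\<lambda>j. T i j \<omega>) ` {1..N i \<omega>})} \<in> events"
proof -
  have m: "(\<lambda>\<omega>. Max ((\<lambda>j. T i j \<omega>) ` {1..N i \<omega>})) \<in> borel_measurable (Mi i)"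
    by (rule W_meas(2)[OF blk_N blk_T])
  have "(\<lambda>\<omega>. Max ((\<lambda>j. T i j \<omega>) ` {1..N i \<omega>})) -` {t<..} \<inter> space (Mi i) \<in> sets (Mi i)"
    by (rule measurable_sets[OF m]) auto
  then show "{\<omega>\<in>space M. t < Max ((\<lambda>j. T i j \<omega>) ` {1..N i \<omega>})} \<in> sets (Mi i)"
    unfolding Mi_space by (simp add: vimage_def Int_def conj_commute)
  have m2: "(\<lambda>\<omega>. Max ((\<lambda>j. T i j \<omega>) ` {1..N i \<omega>})) \<in> borel_measurable M"
    by (rule W_meas(2)[OF N_meas[OF i] T_meas[OF i]])
  have "(\<lambda>\<omega>. Max ((\<lambda>j. T i j \<omega>) ` {1..N i \<omega>})) -` {t<..} \<inter> space M \<in> events"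
    by (rule measurable_sets[OF m2]) auto
  then show "{\<omega>\<in>space M. t < Max ((\<lambda>j. T i j \<omega>) ` {1..N i \<omega>})} \<in> events"
    by (simp add: vimage_def Int_def conj_commute)
qed

lemma Emin:
  assumes i: "i < theta"
  shows "prob {\<omega>\<in>space M. t < Min ((\<lambda>j. T i j \<omega>) ` {1..N i \<omega>})} = p * S t / (1 - (1 - p) * S t)"
proof (rule sum_N[OF i Wmin_sets(2)[OF i]])
  fix n :: nat assume n: "n \<ge> 1"
  have "{\<omega>\<in>space M. t < Min ((\<lambda>j. T i j \<omega>) ` {1..N i \<omega>})} \<inter> {\<omega>\<in>space M. N i \<omega> = n}
      = {\<omega>\<in>space M. N i \<omega> = n} \<inter> (\<Inter>j\<in>{1..n}. T i j -` {t<..} \<inter> space M)"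
    using n by auto
  also have "prob \<dots> = prob {\<omega>\<in>space M. N i \<omega> = n} * (\<Prod>j\<in>{1..n}. prob (T i j -` {t<..} \<inter> space M))"
    by (rule prod_indep[OF i]) auto
  also have "(\<Prod>j\<in>{1..n}. prob (T i j -` {t<..} \<inter> space M)) = (\<Prod>j\<in>{1..n}. S t)"
  proof (rule prod.cong)
    fix j assume "j \<in> {1..n}"
    have "T i j -` {t<..} \<inter> space M = {\<omega>\<in>space M. T i j \<omega> > t}" by auto
    then show "prob (T i j -` {t<..} \<inter> space M) = S t" using surv[OF i] \<open>j \<in> {1..n}\<close> by simp
  qed simp
  finally show "prob ({\<omega>\<in>space M. t < Min ((\<lambda>j. T i j \<omega>) ` {1..N i \<omega>})} \<inter> {\<omega>\<in>space M. N i \<omega> = n})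
      = p * (1 - p) ^ (n - 1) * S t ^ n"
    using geom[OF i n] by simp
next
  have "norm ((1 - p) * S t) < 1"
    using p0 p1 S_bounds[of t] mult_left_mono[of "S t" 1 "1-p"] by (auto simp: abs_mult)
  then have "(\<lambda>n. (p * S t) * ((1 - p) * S t) ^ n) sums ((p * S t) * (1 / (1 - (1 - p) * S t)))"
    by (intro sums_mult geometric_sums)
  then show "(\<lambda>n. p * (1 - p) ^ (Suc n - 1) * S t ^ Suc n) sums (p * S t / (1 - (1 - p) * S t))"
    by (simp add: power_mult_distrib mult_ac)
qed

lemma Emax:
  assumes i: "i < theta"
  shows "prob {\<omega>\<in>space M. t < Max ((\<lambda>j. T i j \<omega>) ` {1..N i \<omega>})}
         = 1 - p * (1 - S t) / (1 - (1 - p) * (1 - S t))"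
proof (rule sum_N[OF i Vmax_sets(2)[OF i]])
  fix n :: nat assume n: "n \<ge> 1"
  let ?A = "{\<omega>\<in>space M. N i \<omega> = n} \<inter> (\<Inter>j\<in>{1..n}. T i j -` {..t} \<inter> space M)"
  have Aev: "?A \<in> events"
    using N_ev[OF i] n by (intro sets.Int sets.finite_INT measurable_sets[OF T_meas[OF i]]; simp)
  have "{\<omega>\<in>space M. t < Max ((\<lambda>j. T i j \<omega>) ` {1..N i \<omega>})} \<inter> {\<omega>\<in>space M. N i \<omega> = n}
      = {\<omega>\<in>space M. N i \<omega> = n} - ?A"
  proof (rule set_eqI)
    fix x
    show "x \<in> {\<omega>\<in>space M. t < Max ((\<lambda>j. T i j \<omega>) ` {1..N i \<omega>})} \<inter> {\<omega>\<in>space M. N i \<omega> = n}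
       \<longleftrightarrow> x \<in> {\<omega>\<in>space M. N i \<omega> = n} - ?A"
    proof (cases "x \<in> space M \<and> N i x = n")
      case True
      have "t < Max ((\<lambda>j. T i j x) ` {1..n}) \<longleftrightarrow> (\<exists>j\<in>{1..n}. t < T i j x)"
        using n by (subst Max_gr_iff) auto
      then show ?thesis using True by (auto simp: not_le)
    qed auto
  qed
  also have "prob \<dots> = prob {\<omega>\<in>space M. N i \<omega> = n} - prob ?A"
    by (rule finite_measure_Diff[OF N_ev[OF i] Aev]) auto
  also have "prob ?A = prob {\<omega>\<in>space M. N i \<omega> = n} * (\<Prod>j\<in>{1..n}. prob (T i j -` {..t} \<inter> space M))"
    by (rule prod_indep[OF i]) auto
  also have "(\<Prod>j\<in>{1..n}. prob (T i j -` {..t} \<inter> space M)) = (\<Prod>j\<in>{1..n}. 1 - S t)"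
  proof (rule prod.cong)
    fix j assume j: "j \<in> {1..n}"
    have jj: "1 \<le> j" using j by auto
    have ev: "{\<omega>\<in>space M. T i j \<omega> > t} \<in> events"
      using T_meas[OF i jj] by measurable
    have "T i j -` {..t} \<inter> space M = space M - {\<omega>\<in>space M. T i j \<omega> > t}" by auto
    then show "prob (T i j -` {..t} \<inter> space M) = 1 - S t"
      using surv[OF i] j finite_measure_compl[OF ev] prob_space by simp
  qed simp
  finally show "prob ({\<omega>\<in>space M. t < Max ((\<lambda>j. T i j \<omega>) ` {1..N i \<omega>})} \<inter> {\<omega>\<in>space M. N i \<omega> = n})
      = p * (1 - p) ^ (n - 1) - p * (1 - p) ^ (n - 1) * (1 - S t) ^ n"
    using geom[OF i n] by simp
next
  have "norm ((1 - p) * (1 - S t)) < 1"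
    using p0 p1 S_bounds[of t] mult_left_mono[of "1 - S t" 1 "1-p"] by (auto simp: abs_mult)
  then have "(\<lambda>n. (p * (1 - S t)) * ((1 - p) * (1 - S t)) ^ n) sums ((p * (1 - S t)) * (1 / (1 - (1 - p) * (1 - S t))))"
    by (intro sums_mult geometric_sums)
  moreover have "(\<lambda>n. p * (1 - p) ^ n) sums (p * (1 / (1 - (1 - p))))"
    using p0 p1 by (intro sums_mult geometric_sums) auto
  ultimately have "(\<lambda>n. p * (1 - p) ^ n - (p * (1 - S t)) * ((1 - p) * (1 - S t)) ^ n)
     sums (p * (1 / (1 - (1 - p))) - (p * (1 - S t)) * (1 / (1 - (1 - p) * (1 - S t))))"
    by (intro sums_diff)
  then show "(\<lambda>n. p * (1 - p) ^ (Suc n - 1) - p * (1 - p) ^ (Suc n - 1) * (1 - S t) ^ Suc n)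
     sums (1 - p * (1 - S t) / (1 - (1 - p) * (1 - S t)))"
    using p0 by (simp add: power_mult_distrib mult_ac)
qed


lemma Zmin:
  "(\<lambda>\<omega>. Min ((\<lambda>i. Min ((\<lambda>j. T i j \<omega>) ` {1..N i \<omega>})) ` {..<theta})) \<in> borel_measurable M"
  "prob {\<omega>\<in>space M. t < Min ((\<lambda>i. Min ((\<lambda>j. T i j \<omega>) ` {1..N i \<omega>})) ` {..<theta})}
    = (p * S t / (1 - (1 - p) * S t)) ^ theta"
proof -
  show "(\<lambda>\<omega>. Min ((\<lambda>i. Min ((\<lambda>j. T i j \<omega>) ` {1..N i \<omega>})) ` {..<theta})) \<in> borel_measurable M"
    by (intro borel_measurable_Min W_meas(1)[OF N_meas T_meas]) auto
  have "0 \<in> {..<theta}" using theta by simp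
  then have ne: "{..<theta} \<noteq> {}" by blast
  have "{\<omega>\<in>space M. t < Min ((\<lambda>i. Min ((\<lambda>j. T i j \<omega>) ` {1..N i \<omega>})) ` {..<theta})}
     = (\<Inter>i\<in>{..<theta}. {\<omega>\<in>space M. t < Min ((\<lambda>j. T i j \<omega>) ` {1..N i \<omega>})})"
  proof (rule set_eqI)
    fix \<omega>
    have "t < Min ((\<lambda>i. Min ((\<lambda>j. T i j \<omega>) ` {1..N i \<omega>})) ` {..<theta}) \<longleftrightarrow> (\<forall>i\<in>{..<theta}. t < Min ((\<lambda>j. T i j \<omega>) ` {1..N i \<omega>}))"
      by (subst Min_gr_iff) (use ne in auto)
    then show "\<omega> \<in> {\<omega>\<in>space M. t < Min ((\<lambda>i. Min ((\<lambda>j. T i j \<omega>) ` {1..N i \<omega>})) ` {..<theta})} \<longleftrightarrow>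
       \<omega> \<in> (\<Inter>i\<in>{..<theta}. {\<omega>\<in>space M. t < Min ((\<lambda>j. T i j \<omega>) ` {1..N i \<omega>})})"
      using ne by blast
  qed
  also have "prob \<dots> = (\<Prod>i\<in>{..<theta}. prob {\<omega>\<in>space M. t < Min ((\<lambda>j. T i j \<omega>) ` {1..N i \<omega>})})"
  proof (rule indep_setsD[OF blocks_indep])
    show "\<forall>i\<in>{..<theta}. {\<omega>\<in>space M. t < Min ((\<lambda>j. T i j \<omega>) ` {1..N i \<omega>})} \<in> sets (Mi i)"
      using Wmin_sets(1) by blast
  qed (use ne in auto)
  also have "\<dots> = (\<Prod>i\<in>{..<theta}. p * S t / (1 - (1 - p) * S t))"
    by (intro prod.cong refl Emin) simp
  finally show "prob {\<omega>\<in>space M. t < Min ((\<lambda>i. Min ((\<lambda>j. T i j \<omega>) ` {1..N i \<omega>})) ` {..<theta})}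
    = (p * S t / (1 - (1 - p) * S t)) ^ theta" by simp
qed

lemma Zmax:
  "(\<lambda>\<omega>. Min ((\<lambda>i. Max ((\<lambda>j. T i j \<omega>) ` {1..N i \<omega>})) ` {..<theta})) \<in> borel_measurable M"
  "prob {\<omega>\<in>space M. t < Min ((\<lambda>i. Max ((\<lambda>j. T i j \<omega>) ` {1..N i \<omega>})) ` {..<theta})}
    = (1 - p * (1 - S t) / (1 - (1 - p) * (1 - S t))) ^ theta"
proof -
  show "(\<lambda>\<omega>. Min ((\<lambda>i. Max ((\<lambda>j. T i j \<omega>) ` {1..N i \<omega>})) ` {..<theta})) \<in> borel_measurable M"
    by (intro borel_measurable_Min W_meas(2)[OF N_meas T_meas]) auto
  have "0 \<in> {..<theta}" using theta by simp
  then have ne: "{..<theta} \<noteq> {}" by blast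
  have "{\<omega>\<in>space M. t < Min ((\<lambda>i. Max ((\<lambda>j. T i j \<omega>) ` {1..N i \<omega>})) ` {..<theta})}
     = (\<Inter>i\<in>{..<theta}. {\<omega>\<in>space M. t < Max ((\<lambda>j. T i j \<omega>) ` {1..N i \<omega>})})"
  proof (rule set_eqI)
    fix \<omega>
    have "t < Min ((\<lambda>i. Max ((\<lambda>j. T i j \<omega>) ` {1..N i \<omega>})) ` {..<theta}) \<longleftrightarrow> (\<forall>i\<in>{..<theta}. t < Max ((\<lambda>j. T i j \<omega>) ` {1..N i \<omega>}))"
      by (subst Min_gr_iff) (use ne in auto)
    then show "\<omega> \<in> {\<omega>\<in>space M. t < Min ((\<lambda>i. Max ((\<lambda>j. T i j \<omega>) ` {1..N i \<omega>})) ` {..<theta})} \<longleftrightarrow>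
       \<omega> \<in> (\<Inter>i\<in>{..<theta}. {\<omega>\<in>space M. t < Max ((\<lambda>j. T i j \<omega>) ` {1..N i \<omega>})})"
      using ne by blast
  qed
  also have "prob \<dots> = (\<Prod>i\<in>{..<theta}. prob {\<omega>\<in>space M. t < Max ((\<lambda>j. T i j \<omega>) ` {1..N i \<omega>})})"
  proof (rule indep_setsD[OF blocks_indep])
    show "\<forall>i\<in>{..<theta}. {\<omega>\<in>space M. t < Max ((\<lambda>j. T i j \<omega>) ` {1..N i \<omega>})} \<in> sets (Mi i)"
      using Vmax_sets(1) by blast
  qed (use ne in auto)
  also have "\<dots> = (\<Prod>i\<in>{..<theta}. 1 - p * (1 - S t) / (1 - (1 - p) * (1 - S t)))"
    by (intro prod.cong refl Emax) simp
  finally show "prob {\<omega>\<in>space M. t < Min ((\<lambda>i. Max ((\<lambda>j. T i j \<omega>) ` {1..N i \<omega>})) ` {..<theta})}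
    = (1 - p * (1 - S t) / (1 - (1 - p) * (1 - S t))) ^ theta" by simp
qed

lemma Emin_nonneg: "0 \<le> p * S t / (1 - (1 - p) * S t)"
proof -
  have "0 \<le> prob {\<omega>\<in>space M. t < Min ((\<lambda>j. T 0 j \<omega>) ` {1..N 0 \<omega>})}" by (rule measure_nonneg)
  moreover have "0 < theta" using theta by simp
  note e = Emin[OF this, of t]
  ultimately show ?thesis by (simp only: e)
qed

lemma Emax_nonneg: "0 \<le> 1 - p * (1 - S t) / (1 - (1 - p) * (1 - S t))"
proof -
  have "0 \<le> prob {\<omega>\<in>space M. t < Max ((\<lambda>j. T 0 j \<omega>) ` {1..N 0 \<omega>})}" by (rule measure_nonneg)
  moreover have "0 < theta" using theta by simp
  note e = Emax[OF this, of t]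
  ultimately show ?thesis by (simp only: e)
qed

end


lemma alg_max0:
  fixes S alpha :: real
  assumes al: "alpha > 1" and S0: "S \<ge> 0"
  shows "1 - 1/alpha * (1 - S) / (1 - (1 - 1/alpha) * (1 - S)) = alpha * S / (1 - (1 - alpha) * S)"
proof -
  define D2 where "D2 = 1 - (1 - alpha) * S"
  have "(alpha - 1) * S \<ge> 0" using al S0 by simp
  then have D2: "D2 > 0" unfolding D2_def by (simp add: algebra_simps)
  have a0: "alpha \<noteq> 0" using al by simp
  have q: "1 - 1/alpha = (alpha - 1)/alpha" using a0 by (simp add: diff_divide_distrib)
  have "1 - (1 - 1/alpha) * (1 - S) = (alpha - (alpha - 1) * (1 - S)) / alpha"
    unfolding q using a0 by (simp add: field_simps)
  also have "alpha - (alpha - 1) * (1 - S) = D2" unfolding D2_def by (simp add: algebra_simps)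
  finally have "1 - (1 - 1/alpha) * (1 - S) = D2 / alpha" .
  then have "1 - 1/alpha * (1 - S) / (1 - (1 - 1/alpha) * (1 - S)) = 1 - (1 - S) / D2"
    using a0 by simp
  also have "\<dots> = (D2 - (1 - S)) / D2" using D2 by (simp add: diff_divide_distrib)
  also have "D2 - (1 - S) = alpha * S" unfolding D2_def by (simp add: algebra_simps)
  finally show ?thesis unfolding D2_def .
qed

lemma alg_min:
  fixes a b S alpha :: real
  assumes b: "1 - b \<noteq> 0" and S: "S = (a - b) / (1 - b)" and D: "1 - (1 - alpha) * S > 0"
  shows "alpha * S / (1 - (1 - alpha) * S) = alpha * (a - b) / (1 - alpha * b - (1 - alpha) * a)"
proof -
  have ab: "a - b = (1 - b) * S" using b S by simp
  have e: "1 - alpha * b - (1 - alpha) * a = (1 - b) * (1 - (1 - alpha) * S)"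
  proof -
    have "(1 - b) * (1 - (1 - alpha) * S) = (1 - b) - (1 - alpha) * ((1 - b) * S)"
      by (simp add: algebra_simps)
    also have "\<dots> = 1 - alpha * b - (1 - alpha) * a" unfolding ab[symmetric] by (simp add: algebra_simps)
    finally show ?thesis by simp
  qed
  show ?thesis unfolding e ab using b D by simp
qed

lemma pow_powr:
  fixes c :: real and n :: nat
  assumes "0 \<le> c" "n \<ge> 1"
  shows "c ^ n = c powr real n"
proof (cases "c = 0")
  case True then show ?thesis using assms by simp
next
  case False then show ?thesis using assms by (simp add: powr_realpow)
qed

theorem proposition1:
  fixes M :: "'a measure" and theta :: nat and lam alpha p :: real
    and G :: "real \<Rightarrow> real"
    and N :: "nat \<Rightarrow> 'a \<Rightarrow> nat" and T :: "nat \<Rightarrow> nat \<Rightarrow> 'a \<Rightarrow> real"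
  assumes "prob_space M"
    and "theta \<ge> 1"
    and "lam \<noteq> 0"
    and "is_cdf G"
    and "0 < p" and "p \<le> 1"
    and indep: "prob_space.indep_vars M (\<lambda>_. borel) (joint_family N T) (joint_index theta)"
    and geom: "\<And>i n. i < theta \<Longrightarrow> n \<ge> 1 \<Longrightarrow>
                 measure M {\<omega> \<in> space M. N i \<omega> = n} = p * (1 - p) ^ (n - 1)"
    and pg: "\<And>i j t. i < theta \<Longrightarrow> j \<ge> 1 \<Longrightarrow>
                 measure M {\<omega> \<in> space M. T i j \<omega> > t} = PG_surv G lam t"
  shows
    "(0 < alpha \<and> alpha \<le> 1 \<and> p = alpha \<longrightarrow>
       (let Z = (\<lambda>\<omega>. Min ((\<lambda>i. Min ((\<lambda>j. T i j \<omega>) ` {1..N i \<omega>})) ` {..<theta}))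
        in Z \<in> borel_measurable M \<and>
           (\<forall>t. measure M {\<omega> \<in> space M. Z \<omega> > t} = GMOP_surv G (real theta) alpha lam t)))
   \<and> (alpha > 1 \<and> p = 1 / alpha \<longrightarrow>
       (let Z = (\<lambda>\<omega>. Min ((\<lambda>i. Max ((\<lambda>j. T i j \<omega>) ` {1..N i \<omega>})) ` {..<theta}))
        in Z \<in> borel_measurable M \<and>
           (\<forall>t. measure M {\<omega> \<in> space M. Z \<omega> > t} = GMOP_surv G (real theta) alpha lam t)))"
  proof -
  have GG: "gmop M theta p N T (PG_surv G lam)"
    unfolding gmop_def gmop_axioms_def using assms by auto
  interpret g: gmop M theta p N T "PG_surv G lam" by (rule GG)
  have b: "1 - exp (- lam) \<noteq> 0" using assms(3) by simp
  have Sdef: "PG_surv G lam t = (exp (- lam * G t) - exp (- lam)) / (1 - exp (- lam))" for t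
    unfolding PG_surv_def ..
  show ?thesis
  proof (intro conjI impI)
    assume h: "0 < alpha \<and> alpha \<le> 1 \<and> p = alpha"
    show "let Z = (\<lambda>\<omega>. Min ((\<lambda>i. Min ((\<lambda>j. T i j \<omega>) ` {1..N i \<omega>})) ` {..<theta}))
        in Z \<in> borel_measurable M \<and>
           (\<forall>t. measure M {\<omega> \<in> space M. Z \<omega> > t} = GMOP_surv G (real theta) alpha lam t)"
      unfolding Let_def
    proof (intro conjI allI)
      show "(\<lambda>\<omega>. Min ((\<lambda>i. Min ((\<lambda>j. T i j \<omega>) ` {1..N i \<omega>})) ` {..<theta})) \<in> borel_measurable M"
        by (rule g.Zmin(1))
      fix t
      let ?S = "PG_surv G lam t"
      have D: "1 - (1 - alpha) * ?S > 0"
      proof -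
        have "(1 - alpha) * ?S \<le> (1 - alpha) * 1"
          using h g.S_bounds[of t] by (intro mult_left_mono) auto
        then show ?thesis using h by simp
      qed
      have "measure M {\<omega> \<in> space M. Min ((\<lambda>i. Min ((\<lambda>j. T i j \<omega>) ` {1..N i \<omega>})) ` {..<theta}) > t}
          = (p * ?S / (1 - (1 - p) * ?S)) ^ theta"
        by (rule g.Zmin(2))
      also have "\<dots> = (p * ?S / (1 - (1 - p) * ?S)) powr real theta"
        by (rule pow_powr[OF g.Emin_nonneg assms(2)])
      also have "p * ?S / (1 - (1 - p) * ?S) = alpha * (exp (- lam * G t) - exp (- lam)) /
          (1 - alpha * exp (- lam) - (1 - alpha) * exp (- lam * G t))"
        using h alg_min[OF b Sdef D] by simp
      finally show "measure M {\<omega> \<in> space M. Min ((\<lambda>i. Min ((\<lambda>j. T i j \<omega>) ` {1..N i \<omega>})) ` {..<theta}) > t}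
          = GMOP_surv G (real theta) alpha lam t"
        unfolding GMOP_surv_def .
    qed
  next
    assume h: "alpha > 1 \<and> p = 1 / alpha"
    show "let Z = (\<lambda>\<omega>. Min ((\<lambda>i. Max ((\<lambda>j. T i j \<omega>) ` {1..N i \<omega>})) ` {..<theta}))
        in Z \<in> borel_measurable M \<and>
           (\<forall>t. measure M {\<omega> \<in> space M. Z \<omega> > t} = GMOP_surv G (real theta) alpha lam t)"
      unfolding Let_def
    proof (intro conjI allI)
      show "(\<lambda>\<omega>. Min ((\<lambda>i. Max ((\<lambda>j. T i j \<omega>) ` {1..N i \<omega>})) ` {..<theta})) \<in> borel_measurable M"
        by (rule g.Zmax(1))
      fix t
      let ?S = "PG_surv G lam t"
      have D: "1 - (1 - alpha) * ?S > 0"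
      proof -
        have "(alpha - 1) * ?S \<ge> 0" using h g.S_bounds[of t] by simp
        then show ?thesis by (simp add: algebra_simps)
      qed
      have "measure M {\<omega> \<in> space M. Min ((\<lambda>i. Max ((\<lambda>j. T i j \<omega>) ` {1..N i \<omega>})) ` {..<theta}) > t}
          = (1 - p * (1 - ?S) / (1 - (1 - p) * (1 - ?S))) ^ theta"
        by (rule g.Zmax(2))
      also have "\<dots> = (1 - p * (1 - ?S) / (1 - (1 - p) * (1 - ?S))) powr real theta"
        by (rule pow_powr[OF g.Emax_nonneg assms(2)])
      also have "1 - p * (1 - ?S) / (1 - (1 - p) * (1 - ?S)) = alpha * ?S / (1 - (1 - alpha) * ?S)"
        using h alg_max0[of alpha ?S] g.S_bounds[of t] by simp
      also have "\<dots> = alpha * (exp (- lam * G t) - exp (- lam)) /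
          (1 - alpha * exp (- lam) - (1 - alpha) * exp (- lam * G t))"
        by (rule alg_min[OF b Sdef D])
      finally show "measure M {\<omega> \<in> space M. Min ((\<lambda>i. Max ((\<lambda>j. T i j \<omega>) ` {1..N i \<omega>})) ` {..<theta}) > t}
          = GMOP_surv G (real theta) alpha lam t"
        unfolding GMOP_surv_def .
    qed
  qed
qed

end
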